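(* A finite simple graph $G$ is a one-dimensional geometric graph if and only if $\Gamma^*(G)=0$.
   Context: A graph $G$ is a one-dimensional geometric graph if there is a map $\pi:V(G)\to\mathbb R$ such that for all distinct $u,v$, $u\sim v$ iff $|\pi(u)-\pi(v)|\le 1$. For a linear order $\prec$ on $V(G)$ and $v\in V(G)$ let $D(v)=\{x: x\prec v\}$, $U(v)=\{x: v\prec x\}$, and $N(v)$ the set of neighbours of $v$. Let $[x]_+=\max(x,0)$. For $A\subseteq V(G)$, $$\Gamma^*(G,\prec,A)=\frac{1}{|V(G)|^3}\sum_{u\prec v}\big[|N(v)\cap A\cap D(u)|-|N(u)\cap A\cap D(u)|\big]_+ +\frac{1}{|V(G)|^3}\sum_{u\prec v}\big[|N(u)\cap A\cap U(v)|-|N(v)\cap A\cap U(v)|\big]_+ ,$$ where the sums run over ordered pairs $(u,v)$ of vertices with $u\prec v$. Further $\Gamma^*(G,\prec)=\max_{A\subseteq V(G)}\Gamma^*(G,\prec,A)$ and $\Gamma^*(G)=\min_{\prec}\Gamma^*(G,\prec)$, the minimum over all linear orderings of $V(G)$. *)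

theory Defs
  imports Complex_Main
begin

text \<open>A linear order on V is a strict
linear order r \<subseteq> V \<times> V; (x,v) \<in> r means x \<prec> v.\<close>

definition simple_graph :: "'a set \<Rightarrow> ('a \<Rightarrow> 'a \<Rightarrow> bool) \<Rightarrow> bool" where
  "simple_graph V E \<longleftrightarrow> finite V \<and> (\<forall>u v. E u v \<longrightarrow> u \<in> V \<and> v \<in> V)
     \<and> (\<forall>u v. E u v \<longrightarrow> E v u) \<and> (\<forall>v. \<not> E v v)"

definition one_dim_geometric :: "'a set \<Rightarrow> ('a \<Rightarrow> 'a \<Rightarrow> bool) \<Rightarrow> bool" where
  "one_dim_geometric V E \<longleftrightarrow> (\<exists>\<pi> :: 'a \<Rightarrow> real.
     \<forall>u\<in>V. \<forall>v\<in>V. u \<noteq> v \<longrightarrow> (E u v \<longleftrightarrow> \<bar>\<pi> u - \<pi> v\<bar> \<le> 1))"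

definition nbhd :: "'a set \<Rightarrow> ('a \<Rightarrow> 'a \<Rightarrow> bool) \<Rightarrow> 'a \<Rightarrow> 'a set" where
  "nbhd V E v = {x \<in> V. E v x}"

definition down_set :: "'a set \<Rightarrow> 'a rel \<Rightarrow> 'a \<Rightarrow> 'a set" where
  "down_set V r v = {x \<in> V. (x, v) \<in> r}"

definition up_set :: "'a set \<Rightarrow> 'a rel \<Rightarrow> 'a \<Rightarrow> 'a set" where
  "up_set V r v = {x \<in> V. (v, x) \<in> r}"

definition pos_part :: "real \<Rightarrow> real" where
  "pos_part x = max x 0"

definition linear_orders_on :: "'a set \<Rightarrow> 'a rel set" where
  "linear_orders_on V = {r. strict_linear_order_on V r \<and> r \<subseteq> V \<times> V}"

definition Gamma_star_A :: "'a set \<Rightarrow> ('a \<Rightarrow> 'a \<Rightarrow> bool) \<Rightarrow> 'a rel \<Rightarrow> 'a set \<Rightarrow> real" where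
  "Gamma_star_A V E r A =
     (1 / real (card V) ^ 3) * (\<Sum>(u, v)\<in>r.
        pos_part (real (card (nbhd V E v \<inter> A \<inter> down_set V r u))
                - real (card (nbhd V E u \<inter> A \<inter> down_set V r u))))
   + (1 / real (card V) ^ 3) * (\<Sum>(u, v)\<in>r.
        pos_part (real (card (nbhd V E u \<inter> A \<inter> up_set V r v))
                - real (card (nbhd V E v \<inter> A \<inter> up_set V r v))))"

definition Gamma_star_ord :: "'a set \<Rightarrow> ('a \<Rightarrow> 'a \<Rightarrow> bool) \<Rightarrow> 'a rel \<Rightarrow> real" where
  "Gamma_star_ord V E r = Max (Gamma_star_A V E r ` Pow V)"

definition Gamma_star :: "'a set \<Rightarrow> ('a \<Rightarrow> 'a \<Rightarrow> bool) \<Rightarrow> real" where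
  "Gamma_star V E = Min (Gamma_star_ord V E ` linear_orders_on V)"

end

theory Submission
  imports Defs
begin

definition good :: "('a \<Rightarrow> 'a \<Rightarrow> bool) \<Rightarrow> 'a rel \<Rightarrow> bool" where
  "good E r \<longleftrightarrow> (\<forall>u v x. (u,v)\<in>r \<longrightarrow> (x,u)\<in>r \<longrightarrow> E v x \<longrightarrow> E u x)
     \<and> (\<forall>u v x. (u,v)\<in>r \<longrightarrow> (v,x)\<in>r \<longrightarrow> E u x \<longrightarrow> E v x)"

lemma wf_of_slo:
  assumes "finite W" "strict_linear_order_on W r" "r \<subseteq> W \<times> W"
  shows "wf r" "wf (r\<inverse>)"
proof -
  have fin: "finite r" using assms(1,3) finite_subset by blast
  have tr: "trans r" "irrefl r" using assms(2) by (auto simp: strict_linear_order_on_def)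
  have "r\<^sup>+ = r" using tr trancl_id by blast
  hence ac: "acyclic r" using tr by (simp add: acyclic_irrefl)
  show "wf r" using finite_acyclic_wf fin ac by blast
  show "wf (r\<inverse>)" using finite_acyclic_wf_converse fin ac by blast
qed

lemma max_elem:
  assumes "finite W" "W \<noteq> {}" "strict_linear_order_on W r" "r \<subseteq> W \<times> W"
  obtains m where "m\<in>W" "\<forall>x\<in>W. x \<noteq> m \<longrightarrow> (x,m)\<in>r"
proof -
  obtain x where "x\<in>W" using assms(2) by auto
  from wfE_min[OF wf_of_slo(2)[OF assms(1,3,4)] this] obtain z where
    z: "z\<in>W" "\<And>y. (y,z)\<in>r\<inverse> \<Longrightarrow> y\<notin>W" by blast
  then show thesis using that assms(3) unfolding strict_linear_order_on_def total_on_def by blast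
qed

lemma construct:
  assumes "finite W" and sym: "\<And>x y. E x y \<Longrightarrow> E y x"
  shows "strict_linear_order_on W r \<Longrightarrow> r \<subseteq> W \<times> W \<Longrightarrow> good E r \<Longrightarrow>
    \<exists>\<pi>::'a\<Rightarrow>real. \<forall>x y. (x,y)\<in>r \<longrightarrow> \<pi> x < \<pi> y \<and> (E x y \<longrightarrow> \<pi> y - \<pi> x < 1) \<and> (\<not>E x y \<longrightarrow> \<pi> y - \<pi> x > 1)"
  using assms(1)
proof (induction W arbitrary: r rule: finite_psubset_induct)
  case (psubset W)
  show ?case
  proof (cases "W = {}")
    case True
    then have "r = {}" using psubset.prems(2) by auto
    then show ?thesis by auto
  next
    case False
    obtain m where m: "m\<in>W" "\<forall>x\<in>W. x\<noteq>m \<longrightarrow> (x,m)\<in>r"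
      using max_elem[OF psubset.hyps(1) False psubset.prems(1,2)] by blast
    have tr: "trans r" and irr: "irrefl r" and tot: "total_on W r"
      using psubset.prems(1) by (auto simp: strict_linear_order_on_def)
    have nm: "(m,y) \<notin> r" for y
    proof
      assume my: "(m,y)\<in>r"
      then have "y\<in>W" using psubset.prems(2) by auto
      moreover have "y \<noteq> m" using irr my by (auto simp: irrefl_def)
      ultimately have "(y,m)\<in>r" using m by auto
      then show False using tr irr my by (meson irrefl_def transD)
    qed
    define W' where "W' = W - {m}"
    define r' where "r' = r \<inter> (W' \<times> W')"
    have W'sub: "W' \<subset> W" using m W'_def by auto
    have slo': "strict_linear_order_on W' r'"
      using tr irr tot unfolding strict_linear_order_on_def r'_def total_on_def irrefl_def trans_def W'_def
      by blast
    have sub': "r' \<subseteq> W' \<times> W'" by (auto simp: r'_def)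
    have good': "good E r'" using psubset.prems(3) by (auto simp: good_def r'_def)
    have gd: "good E r" by (rule psubset.prems(3))
    obtain \<pi>' :: "'a \<Rightarrow> real" where \<pi>': "\<forall>x y. (x,y)\<in>r' \<longrightarrow> \<pi>' x < \<pi>' y \<and> (E x y \<longrightarrow> \<pi>' y - \<pi>' x < 1) \<and> (\<not>E x y \<longrightarrow> \<pi>' y - \<pi>' x > 1)"
      using psubset.IH[OF W'sub slo' sub' good'] by blast
    have finW': "finite W'" using psubset.hyps(1) W'_def by auto
    have key: "\<exists>c. \<forall>x\<in>W'. \<pi>' x < c \<and> (E x m \<longrightarrow> c - \<pi>' x < 1) \<and> (\<not>E x m \<longrightarrow> c - \<pi>' x > 1)"
    proof (cases "W' = {}")
      case True then show ?thesis by auto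
    next
      case W'ne: False
      define L where "L = {x\<in>W'. E x m}"
      show ?thesis
      proof (cases "L = {}")
        case True
        define c where "c = Max (\<pi>' ` W') + 2"
        have "\<pi>' x \<le> Max (\<pi>' ` W')" if "x\<in>W'" for x using finW' that by auto
        then have "\<forall>x\<in>W'. \<pi>' x < c \<and> (E x m \<longrightarrow> c - \<pi>' x < 1) \<and> (\<not>E x m \<longrightarrow> c - \<pi>' x > 1)"
          using True unfolding L_def c_def by fastforce
        then show ?thesis by blast
      next
        case Lne: False
        then obtain l0 where "l0 \<in> L" by auto
        obtain l where l: "l \<in> L" "\<And>y. (y,l) \<in> r \<Longrightarrow> y \<notin> L"
          using wfE_min[OF wf_of_slo(1)[OF psubset.hyps(1) psubset.prems(1,2)] \<open>l0 \<in> L\<close>] by blast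
        have lW': "l \<in> W'" "E l m" using l(1) L_def by auto
        have lW: "l \<in> W" "l \<noteq> m" using lW' W'_def by auto
        define S where "S = \<pi>' ` W' \<union> (\<lambda>x. \<pi>' x + 1) ` {x\<in>W'. (x,l)\<in>r}"
        have finS: "finite S" using finW' S_def by auto
        have Sne: "S \<noteq> {}" using W'ne S_def by auto
        have Sbound: "s < \<pi>' l + 1" if "s \<in> S" for s
        proof -
          { fix y assume y: "y \<in> W'" "s = \<pi>' y"
            have "\<pi>' y < \<pi>' l + 1"
            proof -
              have yW: "y \<in> W" "y \<noteq> m" using y W'_def by auto
              consider "y = l" | "(y,l)\<in>r" | "(l,y)\<in>r" using tot yW lW unfolding total_on_def by blast
              then show ?thesis
              proof cases
                case 1 then show ?thesis by simp
              next
                case 2 then have "(y,l)\<in>r'" using y lW' r'_def by auto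
                then show ?thesis using \<pi>' by force
              next
                case 3
                have "(y,m)\<in>r" using m yW by auto
                have "E m l" using sym lW' by auto
                then have "E y l" using gd 3 \<open>(y,m)\<in>r\<close> unfolding good_def by blast
                then have "E l y" using sym by auto
                moreover have "(l,y)\<in>r'" using 3 y lW' r'_def by auto
                ultimately show ?thesis using \<pi>' by force
              qed
            qed
            then have ?thesis using y by simp }
          moreover
          { fix y assume y: "y \<in> W'" "(y,l)\<in>r" "s = \<pi>' y + 1"
            have "(y,l)\<in>r'" using y lW' r'_def by auto
            then have ?thesis using \<pi>' y by force }
          ultimately show ?thesis using that S_def by auto
        qed
        define lo where "lo = Max S"
        have lo_lt: "lo < \<pi>' l + 1" using Max_in[OF finS Sne] Sbound lo_def by auto
        define c where "c = (lo + (\<pi>' l + 1)) / 2"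
        have c1: "lo < c" "c < \<pi>' l + 1" using lo_lt c_def by auto
        have geS: "s \<le> lo" if "s\<in>S" for s using finS that lo_def by auto
        show ?thesis
        proof (intro exI ballI)
          fix x assume x: "x\<in>W'"
          have "\<pi>' x \<in> S" using x S_def by auto
          then have lt: "\<pi>' x < c" using geS c1 by fastforce
          have xW: "x \<in> W" "x \<noteq> m" using x W'_def by auto
          show "\<pi>' x < c \<and> (E x m \<longrightarrow> c - \<pi>' x < 1) \<and> (\<not>E x m \<longrightarrow> c - \<pi>' x > 1)"
          proof (cases "(x,l)\<in>r")
            case True
            then have "x \<notin> L" using l by auto
            then have "\<not> E x m" using x L_def by auto
            moreover have "\<pi>' x + 1 \<in> S" using x True S_def by auto
            ultimately show ?thesis using lt geS c1 by fastforce
          next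
            case False
            then have xl: "x = l \<or> (l,x)\<in>r" using tot xW lW unfolding total_on_def by blast
            have "E x m"
            proof (cases "x = l")
              case True then show ?thesis using lW' by simp
            next
              case False
              then have "(l,x)\<in>r" using xl by auto
              moreover have "(x,m)\<in>r" using m xW by auto
              ultimately show ?thesis using gd lW' unfolding good_def by blast
            qed
            moreover have "\<pi>' l \<le> \<pi>' x"
            proof (cases "x = l")
              case True then show ?thesis by simp
            next
              case False
              then have "(l,x)\<in>r'" using xl x lW' r'_def by auto
              then show ?thesis using \<pi>' by force
            qed
            ultimately show ?thesis using lt c1 by auto
          qed
        qed
      qed
    qed
    then obtain c where c: "\<forall>x\<in>W'. \<pi>' x < c \<and> (E x m \<longrightarrow> c - \<pi>' x < 1) \<and> (\<not>E x m \<longrightarrow> c - \<pi>' x > 1)"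
      by blast
    show ?thesis
    proof (intro exI allI impI)
      fix x y assume xy: "(x,y)\<in>r"
      have xm: "x \<noteq> m" using nm xy by auto
      have xyW: "x \<in> W" "y \<in> W" using xy psubset.prems(2) by auto
      show "(\<pi>'(m := c)) x < (\<pi>'(m := c)) y \<and> (E x y \<longrightarrow> (\<pi>'(m := c)) y - (\<pi>'(m := c)) x < 1) \<and> (\<not>E x y \<longrightarrow> (\<pi>'(m := c)) y - (\<pi>'(m := c)) x > 1)"
      proof (cases "y = m")
        case True
        have "x \<in> W'" using xm xyW W'_def by auto
        then show ?thesis using c True xm by auto
      next
        case False
        then have "(x,y)\<in>r'" using xy xm xyW r'_def W'_def by auto
        then show ?thesis using \<pi>' False xm by auto
      qed
    qed
  qed
qed

lemma GA_nonneg: "Gamma_star_A V E r A \<ge> 0"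
  unfolding Gamma_star_A_def pos_part_def
  by (intro add_nonneg_nonneg mult_nonneg_nonneg sum_nonneg) auto

lemma GA_zero:
  assumes "finite V" "r \<subseteq> V \<times> V"
  shows "Gamma_star_A V E r A = 0 \<longleftrightarrow> (\<forall>p\<in>r.
     card (nbhd V E (snd p) \<inter> A \<inter> down_set V r (fst p)) \<le> card (nbhd V E (fst p) \<inter> A \<inter> down_set V r (fst p)) \<and>
     card (nbhd V E (fst p) \<inter> A \<inter> up_set V r (snd p)) \<le> card (nbhd V E (snd p) \<inter> A \<inter> up_set V r (snd p)))" (is "_ \<longleftrightarrow> ?R")
proof (cases "V = {}")
  case True
  then have "r = {}" using assms by auto
  then show ?thesis by (simp add: Gamma_star_A_def)
next
  case False
  have finr: "finite r" using assms finite_subset by blast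
  have cpos: "1 / real (card V) ^ 3 > 0" using False assms(1) by (simp add: card_gt_0_iff)
  define f1 where "f1 = (\<lambda>p. pos_part (real (card (nbhd V E (snd p) \<inter> A \<inter> down_set V r (fst p)))
                - real (card (nbhd V E (fst p) \<inter> A \<inter> down_set V r (fst p)))))"
  define f2 where "f2 = (\<lambda>p. pos_part (real (card (nbhd V E (fst p) \<inter> A \<inter> up_set V r (snd p)))
                - real (card (nbhd V E (snd p) \<inter> A \<inter> up_set V r (snd p)))))"
  have eq: "Gamma_star_A V E r A = (1 / real (card V) ^ 3) * sum f1 r + (1 / real (card V) ^ 3) * sum f2 r"
    unfolding Gamma_star_A_def f1_def f2_def by (simp add: case_prod_beta)
  have n1: "\<forall>p\<in>r. f1 p \<ge> 0" and n2: "\<forall>p\<in>r. f2 p \<ge> 0" unfolding f1_def f2_def pos_part_def by auto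
  have s1: "sum f1 r \<ge> 0" using n1 by (simp add: sum_nonneg)
  have s2: "sum f2 r \<ge> 0" using n2 by (simp add: sum_nonneg)
  have "Gamma_star_A V E r A = 0 \<longleftrightarrow> sum f1 r = 0 \<and> sum f2 r = 0"
    unfolding eq using cpos s1 s2
    by (smt (verit, best) mult_nonneg_nonneg mult_pos_pos mult_eq_0_iff)
  also have "\<dots> \<longleftrightarrow> (\<forall>p\<in>r. f1 p = 0) \<and> (\<forall>p\<in>r. f2 p = 0)"
    using sum_nonneg_eq_0_iff[OF finr] n1 n2 by metis
  also have "\<dots> \<longleftrightarrow> ?R" unfolding f1_def f2_def pos_part_def by auto
  finally show ?thesis by simp
qed

lemma card_cond:
  assumes "finite V" "X \<subseteq> V"
  shows "(\<forall>A\<in>Pow V. card (X \<inter> A \<inter> D) \<le> card (Y \<inter> A \<inter> D)) \<longleftrightarrow> X \<inter> D \<subseteq> Y"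
proof
  assume h: "\<forall>A\<in>Pow V. card (X \<inter> A \<inter> D) \<le> card (Y \<inter> A \<inter> D)"
  define A where "A = X \<inter> D - Y"
  have "A \<in> Pow V" using assms A_def by auto
  then have "card (X \<inter> A \<inter> D) \<le> card (Y \<inter> A \<inter> D)" using h by blast
  moreover have "X \<inter> A \<inter> D = A" "Y \<inter> A \<inter> D = {}" using A_def by auto
  ultimately have "card A = 0" by simp
  moreover have "finite A" using assms A_def finite_subset by blast
  ultimately have "A = {}" by simp
  then show "X \<inter> D \<subseteq> Y" using A_def by auto
next
  assume "X \<inter> D \<subseteq> Y"
  then show "\<forall>A\<in>Pow V. card (X \<inter> A \<inter> D) \<le> card (Y \<inter> A \<inter> D)"
    using assms by (intro ballI card_mono) (auto intro: finite_subset)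
qed

lemma ord_nonneg:
  assumes "finite V"
  shows "Gamma_star_ord V E r \<ge> 0"
proof -
  have "Gamma_star_A V E r {} \<le> Gamma_star_ord V E r"
    unfolding Gamma_star_ord_def using assms by (intro Max_ge) auto
  then show ?thesis using GA_nonneg[of V E r "{}"] by linarith
qed

lemma ord_zero:
  assumes "finite V" "r \<subseteq> V \<times> V"
  shows "Gamma_star_ord V E r = 0 \<longleftrightarrow> good E r"
proof -
  have fin: "finite (Gamma_star_A V E r ` Pow V)" using assms by auto
  have ne: "Gamma_star_A V E r ` Pow V \<noteq> {}" by auto
  have "Gamma_star_ord V E r = 0 \<longleftrightarrow> (\<forall>A\<in>Pow V. Gamma_star_A V E r A = 0)"
  proof
    assume h: "Gamma_star_ord V E r = 0"
    show "\<forall>A\<in>Pow V. Gamma_star_A V E r A = 0"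
    proof
      fix A assume "A \<in> Pow V"
      then have "Gamma_star_A V E r A \<le> Gamma_star_ord V E r"
        unfolding Gamma_star_ord_def using fin by (intro Max_ge) auto
      then show "Gamma_star_A V E r A = 0" using h GA_nonneg[of V E r A] by linarith
    qed
  next
    assume h: "\<forall>A\<in>Pow V. Gamma_star_A V E r A = 0"
    have "Gamma_star_ord V E r \<in> Gamma_star_A V E r ` Pow V"
      unfolding Gamma_star_ord_def using Max_in[OF fin ne] .
    then show "Gamma_star_ord V E r = 0" using h by auto
  qed
  also have "\<dots> \<longleftrightarrow> (\<forall>p\<in>r. (\<forall>A\<in>Pow V.
     card (nbhd V E (snd p) \<inter> A \<inter> down_set V r (fst p)) \<le> card (nbhd V E (fst p) \<inter> A \<inter> down_set V r (fst p))) \<and>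
     (\<forall>A\<in>Pow V. card (nbhd V E (fst p) \<inter> A \<inter> up_set V r (snd p)) \<le> card (nbhd V E (snd p) \<inter> A \<inter> up_set V r (snd p))))"
    using GA_zero[OF assms] by blast
  also have "\<dots> \<longleftrightarrow> (\<forall>p\<in>r. nbhd V E (snd p) \<inter> down_set V r (fst p) \<subseteq> nbhd V E (fst p) \<and>
      nbhd V E (fst p) \<inter> up_set V r (snd p) \<subseteq> nbhd V E (snd p))"
    using card_cond[OF assms(1)] by (simp add: nbhd_def)
  also have "\<dots> \<longleftrightarrow> good E r"
    using assms(2) unfolding good_def nbhd_def down_set_def up_set_def by fastforce
  finally show ?thesis .
qed

lemma lex_order:
  fixes g :: "'a \<Rightarrow> real" and f :: "'a \<Rightarrow> nat"
  assumes "inj_on f V"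
  shows "{(x,y). x\<in>V \<and> y\<in>V \<and> (g x < g y \<or> (g x = g y \<and> f x < f y))} \<in> linear_orders_on V"
  unfolding linear_orders_on_def strict_linear_order_on_def trans_def irrefl_def total_on_def
  using assms inj_on_eq_iff[OF assms] by auto (metis linorder_neqE_nat)

theorem mainTheorem2:
  fixes V :: "'a set" and E :: "'a \<Rightarrow> 'a \<Rightarrow> bool"
  assumes "simple_graph V E"
  shows "one_dim_geometric V E \<longleftrightarrow> Gamma_star V E = 0"
proof -
  have finV: "finite V" and Ein: "\<And>u v. E u v \<Longrightarrow> u \<in> V \<and> v \<in> V"
    and sym: "\<And>u v. E u v \<Longrightarrow> E v u" and irr: "\<And>v. \<not> E v v"
    using assms unfolding simple_graph_def by auto
  obtain f :: "'a \<Rightarrow> nat" and n where f: "f ` V = {i. i < n}" "inj_on f V"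
    using finite_imp_inj_to_nat_seg[OF finV] by blast
  have LOfin: "finite (linear_orders_on V)"
  proof (rule finite_subset)
    show "linear_orders_on V \<subseteq> Pow (V \<times> V)" by (auto simp: linear_orders_on_def)
    show "finite (Pow (V \<times> V))" using finV by simp
  qed
  have LOne: "linear_orders_on V \<noteq> {}" using lex_order[OF f(2), of "\<lambda>_. 0"] by blast
  have LOsub: "r \<subseteq> V \<times> V" if "r \<in> linear_orders_on V" for r
    using that by (auto simp: linear_orders_on_def)
  have gs: "Gamma_star V E = 0 \<longleftrightarrow> (\<exists>r\<in>linear_orders_on V. good E r)"
  proof
    assume h: "Gamma_star V E = 0"
    have "Gamma_star V E \<in> Gamma_star_ord V E ` linear_orders_on V"
      unfolding Gamma_star_def using LOfin LOne by (intro Min_in) auto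
    then obtain r where r: "r \<in> linear_orders_on V" "Gamma_star_ord V E r = 0" using h by auto
    then have "good E r" using ord_zero[OF finV LOsub[OF r(1)]] by simp
    then show "\<exists>r\<in>linear_orders_on V. good E r" using r(1) by blast
  next
    assume "\<exists>r\<in>linear_orders_on V. good E r"
    then obtain r where r0: "r \<in> linear_orders_on V" "good E r" by blast
    then have r: "r \<in> linear_orders_on V" "Gamma_star_ord V E r = 0"
      using ord_zero[OF finV LOsub[OF r0(1)]] by simp_all
    have "Gamma_star V E \<le> Gamma_star_ord V E r" unfolding Gamma_star_def
      by (rule Min_le[OF finite_imageI[OF LOfin] imageI[OF r(1)]])
    then have "Gamma_star V E \<le> 0" using r(2) by simp
    moreover have "Gamma_star V E \<in> Gamma_star_ord V E ` linear_orders_on V"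
      unfolding Gamma_star_def using LOfin LOne by (intro Min_in) auto
    then have "Gamma_star V E \<ge> 0" using ord_nonneg[OF finV] by auto
    ultimately show "Gamma_star V E = 0" by simp
  qed
  have "one_dim_geometric V E \<longleftrightarrow> (\<exists>r\<in>linear_orders_on V. good E r)"
  proof
    assume "one_dim_geometric V E"
    then obtain \<pi> :: "'a \<Rightarrow> real" where pi: "\<forall>u\<in>V. \<forall>v\<in>V. u \<noteq> v \<longrightarrow> (E u v \<longleftrightarrow> \<bar>\<pi> u - \<pi> v\<bar> \<le> 1)"
      unfolding one_dim_geometric_def by blast
    define r where "r = {(x,y). x\<in>V \<and> y\<in>V \<and> (\<pi> x < \<pi> y \<or> (\<pi> x = \<pi> y \<and> f x < f y))}"
    have rLO: "r \<in> linear_orders_on V" unfolding r_def by (rule lex_order[OF f(2)])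
    have irrr: "(x,x) \<notin> r" for x unfolding r_def by auto
    have le: "\<pi> x \<le> \<pi> y" "x \<in> V" "y \<in> V" if "(x,y)\<in>r" for x y using that unfolding r_def by auto
    have "good E r"
      unfolding good_def
    proof (intro conjI allI impI)
      fix u v x assume a: "(u,v)\<in>r" "(x,u)\<in>r" "E v x"
      have "x \<noteq> v" using a(3) irr by auto
      have "x \<noteq> u" using a(2) irrr by auto
      have V: "u \<in> V" "v \<in> V" "x \<in> V" using le[OF a(1)] le[OF a(2)] by auto
      have "\<bar>\<pi> v - \<pi> x\<bar> \<le> 1" using pi[rule_format, OF V(2) V(3)] a(3) \<open>x \<noteq> v\<close> by auto
      then have "\<bar>\<pi> u - \<pi> x\<bar> \<le> 1" using le[OF a(1)] le[OF a(2)] by auto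
      then show "E u x" using pi[rule_format, OF V(1) V(3)] \<open>x \<noteq> u\<close> by auto
    next
      fix u v x assume a: "(u,v)\<in>r" "(v,x)\<in>r" "E u x"
      have "x \<noteq> u" using a(3) irr by auto
      have "x \<noteq> v" using a(2) irrr by auto
      have V: "u \<in> V" "v \<in> V" "x \<in> V" using le[OF a(1)] le[OF a(2)] by auto
      have "\<bar>\<pi> u - \<pi> x\<bar> \<le> 1" using pi[rule_format, OF V(1) V(3)] a(3) \<open>x \<noteq> u\<close> by auto
      then have "\<bar>\<pi> v - \<pi> x\<bar> \<le> 1" using le[OF a(1)] le[OF a(2)] by auto
      then show "E v x" using pi[rule_format, OF V(2) V(3)] \<open>x \<noteq> v\<close> by auto
    qed
    then show "\<exists>r\<in>linear_orders_on V. good E r" using rLO by blast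
  next
    assume "\<exists>r\<in>linear_orders_on V. good E r"
    then obtain r where r: "r \<in> linear_orders_on V" "good E r" by blast
    have slo: "strict_linear_order_on V r" "r \<subseteq> V \<times> V" using r(1) by (auto simp: linear_orders_on_def)
    obtain \<pi> :: "'a \<Rightarrow> real" where pi: "\<forall>x y. (x,y)\<in>r \<longrightarrow> \<pi> x < \<pi> y \<and> (E x y \<longrightarrow> \<pi> y - \<pi> x < 1) \<and> (\<not>E x y \<longrightarrow> \<pi> y - \<pi> x > 1)"
      using construct[OF finV sym slo r(2)] by blast
    have tot: "total_on V r" using slo(1) by (simp add: strict_linear_order_on_def)
    show "one_dim_geometric V E"
      unfolding one_dim_geometric_def
    proof (intro exI ballI impI)
      fix u v assume uv: "u \<in> V" "v \<in> V" "u \<noteq> v"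
      then consider "(u,v)\<in>r" | "(v,u)\<in>r" using tot unfolding total_on_def by blast
      then show "E u v \<longleftrightarrow> \<bar>\<pi> u - \<pi> v\<bar> \<le> 1"
      proof cases
        case 1
        then have "\<pi> u < \<pi> v" "E u v \<Longrightarrow> \<pi> v - \<pi> u < 1" "\<not> E u v \<Longrightarrow> \<pi> v - \<pi> u > 1" using pi by auto
        then show ?thesis by (cases "E u v") auto
      next
        case 2
        then have "\<pi> v < \<pi> u" "E v u \<Longrightarrow> \<pi> u - \<pi> v < 1" "\<not> E v u \<Longrightarrow> \<pi> u - \<pi> v > 1" using pi by auto
        then have "E v u \<longleftrightarrow> \<bar>\<pi> u - \<pi> v\<bar> \<le> 1" by (cases "E v u") auto
        then show ?thesis using sym by blast
      qed
    qed
  qed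
  then show ?thesis using gs by simp
qed

end
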